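(* Let $\kappa$ be a cardinal, let $\mathcal{C},\mathcal{D}$ be categories that have products indexed by sets of cardinality $\kappa$, and let $F:\mathcal{C}\to\mathcal{D}$ be a functor. Assume that $|\mathcal{D}(F(c'),F(c))|\leq\kappa$ for any two objects $c',c$ of $\mathcal{C}$. Then: (1) for any two parallel morphisms $f,g:c'\to c$ in $\mathcal{C}$ we have $F(f)=F(g)$; (2) if $\mathcal{C}$ is strongly connected, then $F$ is isomorphic to a constant functor.
   Context: A category is strongly connected if for any two objects $c,c'$ the hom-set $\mathcal{C}(c,c')$ is non-empty. *)

theory Defs
  imports Main "HOL-Library.Equipollence"
begin

text \<open>A (possibly large) category, presented by a set of objects, hom-sets,
  composition (Comp g f means g after f) and identities.\<close>
record ('o, 'm) category =
  Obj  :: "'o set"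
  Hom  :: "'o \<Rightarrow> 'o \<Rightarrow> 'm set"
  Comp :: "'m \<Rightarrow> 'm \<Rightarrow> 'm"
  Ide  :: "'o \<Rightarrow> 'm"

definition is_category :: "('o, 'm) category \<Rightarrow> bool" where
  "is_category C \<longleftrightarrow>
     (\<forall>a\<in>Obj C. Ide C a \<in> Hom C a a) \<and>
     (\<forall>a\<in>Obj C. \<forall>b\<in>Obj C. \<forall>c\<in>Obj C. \<forall>f\<in>Hom C a b. \<forall>g\<in>Hom C b c.
        Comp C g f \<in> Hom C a c) \<and>
     (\<forall>a\<in>Obj C. \<forall>b\<in>Obj C. \<forall>c\<in>Obj C. \<forall>d\<in>Obj C.
        \<forall>f\<in>Hom C a b. \<forall>g\<in>Hom C b c. \<forall>h\<in>Hom C c d.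
        Comp C h (Comp C g f) = Comp C (Comp C h g) f) \<and>
     (\<forall>a\<in>Obj C. \<forall>b\<in>Obj C. \<forall>f\<in>Hom C a b.
        Comp C (Ide C b) f = f \<and> Comp C f (Ide C a) = f)"

definition is_functor ::
  "('o1, 'm1) category \<Rightarrow> ('o2, 'm2) category \<Rightarrow> ('o1 \<Rightarrow> 'o2) \<Rightarrow> ('m1 \<Rightarrow> 'm2) \<Rightarrow> bool" where
  "is_functor C D Fo Fm \<longleftrightarrow>
     (\<forall>a\<in>Obj C. Fo a \<in> Obj D) \<and>
     (\<forall>a\<in>Obj C. \<forall>b\<in>Obj C. \<forall>f\<in>Hom C a b. Fm f \<in> Hom D (Fo a) (Fo b)) \<and>
     (\<forall>a\<in>Obj C. \<forall>b\<in>Obj C. \<forall>c\<in>Obj C. \<forall>f\<in>Hom C a b. \<forall>g\<in>Hom C b c.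
        Fm (Comp C g f) = Comp D (Fm g) (Fm f)) \<and>
     (\<forall>a\<in>Obj C. Fm (Ide C a) = Ide D (Fo a))"

definition is_iso :: "('o, 'm) category \<Rightarrow> 'o \<Rightarrow> 'o \<Rightarrow> 'm \<Rightarrow> bool" where
  "is_iso C a b f \<longleftrightarrow> f \<in> Hom C a b \<and>
     (\<exists>g\<in>Hom C b a. Comp C g f = Ide C a \<and> Comp C f g = Ide C b)"

definition is_nat_iso ::
  "('o1, 'm1) category \<Rightarrow> ('o2, 'm2) category \<Rightarrow> ('o1 \<Rightarrow> 'o2) \<Rightarrow> ('m1 \<Rightarrow> 'm2)
     \<Rightarrow> ('o1 \<Rightarrow> 'o2) \<Rightarrow> ('m1 \<Rightarrow> 'm2) \<Rightarrow> ('o1 \<Rightarrow> 'm2) \<Rightarrow> bool" where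
  "is_nat_iso C D Fo Fm Go Gm \<eta> \<longleftrightarrow>
     (\<forall>a\<in>Obj C. is_iso D (Fo a) (Go a) (\<eta> a)) \<and>
     (\<forall>a\<in>Obj C. \<forall>b\<in>Obj C. \<forall>f\<in>Hom C a b.
        Comp D (\<eta> b) (Fm f) = Comp D (Gm f) (\<eta> a))"

definition functors_iso ::
  "('o1, 'm1) category \<Rightarrow> ('o2, 'm2) category \<Rightarrow> ('o1 \<Rightarrow> 'o2) \<Rightarrow> ('m1 \<Rightarrow> 'm2)
     \<Rightarrow> ('o1 \<Rightarrow> 'o2) \<Rightarrow> ('m1 \<Rightarrow> 'm2) \<Rightarrow> bool" where
  "functors_iso C D Fo Fm Go Gm \<longleftrightarrow> (\<exists>\<eta>. is_nat_iso C D Fo Fm Go Gm \<eta>)"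

definition iso_to_constant_functor ::
  "('o1, 'm1) category \<Rightarrow> ('o2, 'm2) category \<Rightarrow> ('o1 \<Rightarrow> 'o2) \<Rightarrow> ('m1 \<Rightarrow> 'm2) \<Rightarrow> bool" where
  "iso_to_constant_functor C D Fo Fm \<longleftrightarrow>
     (\<exists>d\<in>Obj D. functors_iso C D Fo Fm (\<lambda>_. d) (\<lambda>_. Ide D d))"

text \<open>C has all products indexed by the set K (hence by any set equipotent to K).\<close>
definition has_products :: "('o, 'm) category \<Rightarrow> 'k set \<Rightarrow> bool" where
  "has_products C K \<longleftrightarrow>
     (\<forall>X. (\<forall>i\<in>K. X i \<in> Obj C) \<longrightarrow>
        (\<exists>P\<in>Obj C. \<exists>\<pi>. (\<forall>i\<in>K. \<pi> i \<in> Hom C P (X i)) \<and>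
           (\<forall>Y\<in>Obj C. \<forall>fs. (\<forall>i\<in>K. fs i \<in> Hom C Y (X i)) \<longrightarrow>
              (\<exists>!u. u \<in> Hom C Y P \<and> (\<forall>i\<in>K. Comp C (\<pi> i) u = fs i)))))"

text \<open>Strongly connected: all hom-sets non-empty (and, as for connected
  categories, the category is non-empty).\<close>
definition strongly_connected :: "('o, 'm) category \<Rightarrow> bool" where
  "strongly_connected C \<longleftrightarrow> Obj C \<noteq> {} \<and>
     (\<forall>a\<in>Obj C. \<forall>b\<in>Obj C. Hom C a b \<noteq> {})"

end

theory Submission
  imports Defs
begin

lemma part1:
  fixes K :: "'k set"
    and C :: "('o1, 'm1) category" and D :: "('o2, 'm2) category"
    and Fo :: "'o1 \<Rightarrow> 'o2" and Fm :: "'m1 \<Rightarrow> 'm2"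
  assumes cC: "is_category C" 
    and pC: "has_products C K"
    and F: "is_functor C D Fo Fm"
    and sz: "\<forall>a\<in>Obj C. \<forall>b\<in>Obj C. Hom D (Fo a) (Fo b) \<lesssim> K"
    and a: "a \<in> Obj C" and b: "b \<in> Obj C" and f: "f \<in> Hom C a b" and g: "g \<in> Hom C a b"
  shows "Fm f = Fm g"
proof (rule ccontr)
  assume ne: "Fm f \<noteq> Fm g"
  have Fo: "\<And>a. a \<in> Obj C \<Longrightarrow> Fo a \<in> Obj D"
      and Fh: "\<And>a b f. a \<in> Obj C \<Longrightarrow> b \<in> Obj C \<Longrightarrow> f \<in> Hom C a b \<Longrightarrow> Fm f \<in> Hom D (Fo a) (Fo b)"
      and Fc: "\<And>a b c f g. a \<in> Obj C \<Longrightarrow> b \<in> Obj C \<Longrightarrow> c \<in> Obj C \<Longrightarrow> f \<in> Hom C a b \<Longrightarrow> g \<in> Hom C b c \<Longrightarrow> Fm (Comp C g f) = Comp D (Fm g) (Fm f)"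
      using F unfolding is_functor_def by blast+
  obtain P \<pi> where P: "P \<in> Obj C" and pi: "\<forall>i\<in>K. \<pi> i \<in> Hom C P b"
    and up: "\<forall>Y\<in>Obj C. \<forall>fs. (\<forall>i\<in>K. fs i \<in> Hom C Y b) \<longrightarrow>
              (\<exists>!u. u \<in> Hom C Y P \<and> (\<forall>i\<in>K. Comp C (\<pi> i) u = fs i))"
    using pC b unfolding has_products_def
    apply (elim allE[where x="\<lambda>_. b"])
    by auto
  have "\<forall>S\<in>Pow K. \<exists>u. u \<in> Hom C a P \<and> (\<forall>i\<in>K. Comp C (\<pi> i) u = (if i \<in> S then f else g))"
  proof
    fix S assume "S \<in> Pow K"
    have h: "\<forall>i\<in>K. (if i \<in> S then f else g) \<in> Hom C a b" using f g by auto
    have e: "\<exists>!u. u \<in> Hom C a P \<and> (\<forall>i\<in>K. Comp C (\<pi> i) u = (if i \<in> S then f else g))"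
      apply (rule up[rule_format, OF a]) using h by blast
    from e show "\<exists>u. u \<in> Hom C a P \<and> (\<forall>i\<in>K. Comp C (\<pi> i) u = (if i \<in> S then f else g))"
      by (rule ex1_implies_ex)
  qed
  then obtain U where U0: "\<forall>S\<in>Pow K. U S \<in> Hom C a P \<and> (\<forall>i\<in>K. Comp C (\<pi> i) (U S) = (if i \<in> S then f else g))"
    by (rule bchoice[elim_format]) blast
  have U: "\<And>S. S \<in> Pow K \<Longrightarrow> U S \<in> Hom C a P \<and> (\<forall>i\<in>K. Comp C (\<pi> i) (U S) = (if i \<in> S then f else g))"
    using U0 by blast
  have Fcomp: "\<And>S i. S \<in> Pow K \<Longrightarrow> i \<in> K \<Longrightarrow> Comp D (Fm (\<pi> i)) (Fm (U S)) = Fm (if i \<in> S then f else g)"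
  proof -
    fix S i assume S: "S \<in> Pow K" and i: "i \<in> K"
    have "Fm (Comp C (\<pi> i) (U S)) = Comp D (Fm (\<pi> i)) (Fm (U S))"
      using Fc[OF a P b conjunct1[OF U[OF S]]] pi i by blast
    then show "Comp D (Fm (\<pi> i)) (Fm (U S)) = Fm (if i \<in> S then f else g)"
      using U[OF S] i by simp
  qed
  have inj: "inj_on (\<lambda>S. Fm (U S)) (Pow K)"
  proof (rule inj_onI, rule ccontr)
    fix S T assume S: "S \<in> Pow K" and T: "T \<in> Pow K" and eq: "Fm (U S) = Fm (U T)" and "S \<noteq> T"
    then obtain i where i: "i \<in> K" and d: "(i \<in> S \<and> i \<notin> T) \<or> (i \<in> T \<and> i \<notin> S)" by blast
    have "Fm (if i \<in> S then f else g) = Fm (if i \<in> T then f else g)"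
      using Fcomp[OF S i] Fcomp[OF T i] eq by simp
    then show False using d ne by (auto split: if_splits)
  qed
  have "(\<lambda>S. Fm (U S)) ` Pow K \<subseteq> Hom D (Fo a) (Fo P)"
  proof
    fix x assume "x \<in> (\<lambda>S. Fm (U S)) ` Pow K"
    then obtain S where "S \<in> Pow K" "x = Fm (U S)" by blast
    then show "x \<in> Hom D (Fo a) (Fo P)" using U Fh[OF a P] by simp
  qed
  then have "Pow K \<lesssim> Hom D (Fo a) (Fo P)" using inj unfolding lepoll_def by blast
  also have "\<dots> \<lesssim> K" using sz a P by simp
  finally have "Pow K \<lesssim> K" .
  then have "K \<approx> Pow K" using lepoll_antisym[OF lepoll_Pow_self[of K]] by simp
  then show False using lesspoll_Pow_self[of K] unfolding lesspoll_def by simp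
qed

theorem proposition2p2:
  fixes K :: "'k set"
    and C :: "('o1, 'm1) category" and D :: "('o2, 'm2) category"
    and Fo :: "'o1 \<Rightarrow> 'o2" and Fm :: "'m1 \<Rightarrow> 'm2"
  assumes "is_category C" and "is_category D"
    and "has_products C K" and "has_products D K"
    and "is_functor C D Fo Fm"
    and "\<forall>a\<in>Obj C. \<forall>b\<in>Obj C. Hom D (Fo a) (Fo b) \<lesssim> K"
  shows "(\<forall>a\<in>Obj C. \<forall>b\<in>Obj C. \<forall>f\<in>Hom C a b. \<forall>g\<in>Hom C a b. Fm f = Fm g)
       \<and> (strongly_connected C \<longrightarrow> iso_to_constant_functor C D Fo Fm)"
proof -
  have P1: "\<And>a b f g. a \<in> Obj C \<Longrightarrow> b \<in> Obj C \<Longrightarrow> f \<in> Hom C a b \<Longrightarrow> g \<in> Hom C a b \<Longrightarrow> Fm f = Fm g"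
    using part1[OF assms(1,3,5,6)] by blast
  have P2: "iso_to_constant_functor C D Fo Fm" if sc: "strongly_connected C"
  proof -
    obtain c0 where c0: "c0 \<in> Obj C" using sc unfolding strongly_connected_def by blast
    have "\<forall>a\<in>Obj C. \<exists>t. t \<in> Hom C a c0" using sc c0 unfolding strongly_connected_def by blast
    then obtain t where t0: "\<forall>a\<in>Obj C. t a \<in> Hom C a c0" by (rule bchoice[elim_format]) blast
    have t: "\<And>a. a \<in> Obj C \<Longrightarrow> t a \<in> Hom C a c0" using t0 by blast
    have "\<forall>a\<in>Obj C. \<exists>s. s \<in> Hom C c0 a" using sc c0 unfolding strongly_connected_def by blast
    then obtain s where s0: "\<forall>a\<in>Obj C. s a \<in> Hom C c0 a" by (rule bchoice[elim_format]) blast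
    have s: "\<And>a. a \<in> Obj C \<Longrightarrow> s a \<in> Hom C c0 a" using s0 by blast
    have catid: "\<And>a. a \<in> Obj C \<Longrightarrow> Ide C a \<in> Hom C a a"
      and catc: "\<And>a b c f g. a \<in> Obj C \<Longrightarrow> b \<in> Obj C \<Longrightarrow> c \<in> Obj C \<Longrightarrow> f \<in> Hom C a b \<Longrightarrow> g \<in> Hom C b c \<Longrightarrow> Comp C g f \<in> Hom C a c"
      using assms(1) unfolding is_category_def by blast+
    have catDl: "\<And>a b f. a \<in> Obj D \<Longrightarrow> b \<in> Obj D \<Longrightarrow> f \<in> Hom D a b \<Longrightarrow> Comp D (Ide D b) f = f"
      using assms(2) unfolding is_category_def by blast
    have Fo: "\<And>a. a \<in> Obj C \<Longrightarrow> Fo a \<in> Obj D"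
      and Fh: "\<And>a b f. a \<in> Obj C \<Longrightarrow> b \<in> Obj C \<Longrightarrow> f \<in> Hom C a b \<Longrightarrow> Fm f \<in> Hom D (Fo a) (Fo b)"
      and Fc: "\<And>a b c f g. a \<in> Obj C \<Longrightarrow> b \<in> Obj C \<Longrightarrow> c \<in> Obj C \<Longrightarrow> f \<in> Hom C a b \<Longrightarrow> g \<in> Hom C b c \<Longrightarrow> Fm (Comp C g f) = Comp D (Fm g) (Fm f)"
      and Fi: "\<And>a. a \<in> Obj C \<Longrightarrow> Fm (Ide C a) = Ide D (Fo a)"
      using assms(5) unfolding is_functor_def by blast+
    define d where "d = Fo c0"
    have d: "d \<in> Obj D" using Fo c0 d_def by blast
    have "is_nat_iso C D Fo Fm (\<lambda>_. d) (\<lambda>_. Ide D d) (\<lambda>a. Fm (t a))"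
      unfolding is_nat_iso_def
    proof (intro conjI ballI)
      fix a assume a: "a \<in> Obj C"
      have ta: "Fm (t a) \<in> Hom D (Fo a) d" using Fh[OF a c0 t[OF a]] d_def by simp
      have sa: "Fm (s a) \<in> Hom D d (Fo a)" using Fh[OF c0 a s[OF a]] d_def by simp
      have c1: "Comp C (s a) (t a) \<in> Hom C a a" using catc[OF a c0 a t[OF a] s[OF a]] .
      have c2: "Comp C (t a) (s a) \<in> Hom C c0 c0" using catc[OF c0 a c0 s[OF a] t[OF a]] .
      have e1: "Comp D (Fm (s a)) (Fm (t a)) = Ide D (Fo a)"
      proof -
        have "Comp D (Fm (s a)) (Fm (t a)) = Fm (Comp C (s a) (t a))" using Fc[OF a c0 a t[OF a] s[OF a]] by simp
        also have "\<dots> = Fm (Ide C a)" using P1[OF a a c1 catid[OF a]] .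
        also have "\<dots> = Ide D (Fo a)" using Fi[OF a] .
        finally show ?thesis .
      qed
      have e2: "Comp D (Fm (t a)) (Fm (s a)) = Ide D d"
      proof -
        have "Comp D (Fm (t a)) (Fm (s a)) = Fm (Comp C (t a) (s a))" using Fc[OF c0 a c0 s[OF a] t[OF a]] by simp
        also have "\<dots> = Fm (Ide C c0)" using P1[OF c0 c0 c2 catid[OF c0]] .
        also have "\<dots> = Ide D d" using Fi[OF c0] d_def by simp
        finally show ?thesis .
      qed
      show "is_iso D (Fo a) d (Fm (t a))"
        unfolding is_iso_def using ta sa e1 e2 by blast
    next
      fix a b f assume a: "a \<in> Obj C" and b: "b \<in> Obj C" and f: "f \<in> Hom C a b"
      have ta: "Fm (t a) \<in> Hom D (Fo a) d" using Fh[OF a c0 t[OF a]] d_def by simp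
      have c1: "Comp C (t b) f \<in> Hom C a c0" using catc[OF a b c0 f t[OF b]] .
      have "Comp D (Fm (t b)) (Fm f) = Fm (Comp C (t b) f)" using Fc[OF a b c0 f t[OF b]] by simp
      also have "\<dots> = Fm (t a)" using P1[OF a c0 c1 t[OF a]] .
      also have "\<dots> = Comp D (Ide D d) (Fm (t a))" using catDl[OF Fo[OF a] d ta] by simp
      finally show "Comp D (Fm (t b)) (Fm f) = Comp D (Ide D d) (Fm (t a))" .
    qed
    then show ?thesis unfolding iso_to_constant_functor_def functors_iso_def using d by blast
  qed
  show ?thesis using P1 P2 by blast
qed

end
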